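(* Let $(a_n)_{n\ge1}$ be an integer sequence such that $(na_n)_{n\ge1}$ is an Euler sequence. Then $(na_n)_{n\ge1}$ is an Euler–Gauss sequence. Moreover, for an integer sequence $(b_n)_{n\ge1}$, the sequence $(nb_n)_{n\ge1}$ is a Gauss sequence if and only if $b_n=0$ for all $n\ge1$.
   Context: $\mu$ is the Möbius function. An Euler sequence is an integer sequence $(c_n)$ with $c_{p^r}\equiv c_{p^{r-1}}\pmod{p^r}$ for all primes $p$ and integers $r\ge1$. For an integer sequence $(c_n)$ and $n\ge1$, $C_n^+=\prod_{d\mid n,\ \mu(d)=1} c_{n/d}$ and $C_n^-=\prod_{d\mid n,\ \mu(d)=-1} c_{n/d}$ (empty products equal $1$); $(c_n)$ is an Euler–Gauss sequence if $C_n^+\equiv C_n^-\pmod n$ for all $n\ge1$, and a Gauss sequence if $\sum_{d\mid n}\mu(d)c_{n/d}\equiv0\pmod n$ for all $n\ge1$. *)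

theory Defs
  imports "HOL-Computational_Algebra.Primes" "HOL-Number_Theory.Cong"
begin

definition moebius :: "nat \<Rightarrow> int" where
  "moebius n = (if n = 0 then 0
     else if \<exists>p. prime p \<and> p^2 dvd n then 0
     else (-1) ^ card (prime_factors n))"

text \<open>Sequences (c_n)_{n>=1} are modelled as functions nat => int; the value at 0 is irrelevant.\<close>
definition euler_seq :: "(nat \<Rightarrow> int) \<Rightarrow> bool" where
  "euler_seq c \<longleftrightarrow> (\<forall>p r. prime p \<and> r \<ge> 1 \<longrightarrow>
      [c (p ^ r) = c (p ^ (r - 1))] (mod int (p ^ r)))"

definition C_plus :: "(nat \<Rightarrow> int) \<Rightarrow> nat \<Rightarrow> int" where
  "C_plus c n = (\<Prod>d\<in>{d. d dvd n \<and> moebius d = 1}. c (n div d))"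

definition C_minus :: "(nat \<Rightarrow> int) \<Rightarrow> nat \<Rightarrow> int" where
  "C_minus c n = (\<Prod>d\<in>{d. d dvd n \<and> moebius d = -1}. c (n div d))"

definition euler_gauss_seq :: "(nat \<Rightarrow> int) \<Rightarrow> bool" where
  "euler_gauss_seq c \<longleftrightarrow> (\<forall>n\<ge>1. [C_plus c n = C_minus c n] (mod int n))"

definition gauss_seq :: "(nat \<Rightarrow> int) \<Rightarrow> bool" where
  "gauss_seq c \<longleftrightarrow> (\<forall>n\<ge>1. [(\<Sum>d | d dvd n. moebius d * c (n div d)) = 0] (mod int n))"

end

theory Submission
  imports Defs
begin

lemma moeb1: "moebius 1 = 1"
  unfolding moebius_def by (auto simp: prime_gt_1_nat)

lemma moebp: assumes "prime (p::nat)" shows "moebius p = -1"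
proof -
  have "\<not> (\<exists>q. prime q \<and> q^2 dvd p)"
  proof
    assume "\<exists>q. prime q \<and> q^2 dvd p"
    then obtain q where q: "prime q" "q^2 dvd p" by auto
    hence "q dvd p" by (meson dvd_power dvd_trans zero_less_numeral)
    hence "q = p" using assms q(1) by (simp add: primes_dvd_imp_eq)
    thus False using q assms
      by (metis dvd_mult_cancel1 nat_dvd_1_iff_1 not_prime_1 power2_eq_square prime_gt_0_nat
          mult.right_neutral less_irrefl)
  qed
  moreover have "prime_factors p = {p}" using assms by (simp add: prime_prime_factors)
  ultimately show ?thesis using assms unfolding moebius_def by auto
qed

lemma moebpow: assumes "prime (p::nat)" "i \<ge> 2" shows "moebius (p^i) = 0"
proof -
  have "p^2 dvd p^i" using assms by (simp add: le_imp_power_dvd)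
  thus ?thesis using assms unfolding moebius_def by auto
qed

lemma fin_div: "(n::nat) \<ge> 1 \<Longrightarrow> finite {d. d dvd n \<and> P d}"
  by (rule finite_subset[of _ "{d. d dvd n}"]) (auto simp: finite_divisors_nat)

lemma part1:
  fixes a :: "nat \<Rightarrow> int" and n :: nat
  assumes E: "euler_seq (\<lambda>n. int n * a n)" and n: "n \<ge> 1"
  shows "[C_plus (\<lambda>n. int n * a n) n = C_minus (\<lambda>n. int n * a n) n] (mod int n)"
proof (cases "n = 1")
  case True thus ?thesis by simp
next
  case False
  define c where "c = (\<lambda>n. int n * a n)"
  obtain p where p: "prime p" "p dvd n" using False prime_factor_nat by blast
  define k where "k = multiplicity p n"
  obtain m where m: "n = p ^ k * m" "\<not> p dvd m"
    using multiplicity_decompose'[of n p] n p(1) unfolding k_def by (metis not_one_le_zero not_prime_unit)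
  have k: "k \<ge> 1" using p n k_def prime_multiplicity_gt_zero_iff[of p n] by simp
  show ?thesis
  proof (cases "m = 1")
    case True
    hence nk: "n = p ^ k" using m(1) by simp
    have D: "d = 1 \<or> d = p \<or> moebius d = 0" if "d dvd n" for d
    proof -
      have "d dvd p ^ k" using that nk by simp
      then obtain i where i: "i \<le> k" "d = p ^ i" using divides_primepow_nat[OF p(1), of d k] by blast
      show ?thesis
      proof (cases "i \<ge> 2")
        case True thus ?thesis using moebpow[OF p(1) True] i by simp
      next
        case False hence "i = 0 \<or> i = 1" by linarith
        thus ?thesis using i by auto
      qed
    qed
    have mp: "moebius p = -1" using moebp[OF p(1)] .
    have S1: "{d. d dvd n \<and> moebius d = 1} = {1}"
      using D mp moeb1 by fastforce
    have S2: "{d. d dvd n \<and> moebius d = -1} = {p}"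
      using D mp moeb1 p(2) by fastforce
    have "n div p = p ^ (k - 1)" using nk k p
      by (metis Suc_diff_le diff_Suc_1 nonzero_mult_div_cancel_left power_Suc prime_gt_0_nat
          less_numeral_extra(3))
    moreover have "[c (p ^ k) = c (p ^ (k - 1))] (mod int (p ^ k))"
      using E k p unfolding euler_seq_def c_def by blast
    ultimately show ?thesis unfolding C_plus_def C_minus_def S1 S2 c_def[symmetric] using nk by simp
  next
    case False
    have "m \<noteq> 0" using m n by auto
    with False obtain q where q: "prime q" "q dvd m" using prime_factor_nat by blast
    have qn: "q dvd n" using q m by simp
    have pq: "p \<noteq> q" using q m p by auto
    have "p * q dvd n" using p qn pq q
      by (simp add: divides_mult primes_coprime)
    then obtain r where r: "n = p * q * r" by blast
    have ppos: "p > 0" "q > 0" using p q by (auto simp: prime_gt_0_nat)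
    have ndp: "n div p = q * r" "n div q = p * r" using r ppos by auto
    have "int n dvd c n" unfolding c_def by simp
    also have "c n dvd C_plus c n" unfolding C_plus_def
      using dvd_prodI[OF fin_div[OF n], of 1 "\<lambda>d. d dvd n \<and> moebius d = 1" "\<lambda>d. c (n div d)"] moeb1
      by simp
    finally have A: "int n dvd C_plus c n" .
    have "int n dvd int (n div p) * int (n div q)" unfolding ndp r
      by (simp add: algebra_simps)
    also have "\<dots> dvd c (n div p) * c (n div q)" unfolding c_def by (simp add: mult_dvd_mono)
    also have "\<dots> = prod (\<lambda>d. c (n div d)) {p, q}" using pq by simp
    also have "\<dots> dvd C_minus c n" unfolding C_minus_def
      by (rule prod_dvd_prod_subset[OF fin_div[OF n]]) (use p qn q moebp in auto)
    finally have B: "int n dvd C_minus c n" .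
    show ?thesis using A B unfolding c_def[symmetric]
      by (metis cong_def dvd_eq_mod_eq_0)
  qed
qed

lemma part2:
  fixes b :: "nat \<Rightarrow> int"
  assumes G: "gauss_seq (\<lambda>n. int n * b n)"
  shows "n \<ge> 1 \<Longrightarrow> b n = 0"
proof (induction n rule: less_induct)
  case (less n)
  define x where "x = int n * b n"
  obtain p where p: "prime p" "p > nat \<bar>x\<bar> + n" using bigger_prime by blast
  have ppos: "p > 0" using p by (simp add: prime_gt_0_nat)
  define N where "N = n * p"
  have N1: "N \<ge> 1" using less.prems ppos N_def by simp
  define f where "f = (\<lambda>d. moebius d * (int (N div d) * b (N div d)))"
  have cong: "[(\<Sum>d | d dvd N. f d) = 0] (mod int N)"
    using G N1 unfolding gauss_seq_def f_def by blast
  have "int p dvd int N" unfolding N_def by simp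
  hence S: "int p dvd (\<Sum>d | d dvd N. f d)"
    using cong by (metis cong_0_iff dvd_trans)
  have fin: "finite {d. d dvd N}" using N1 by (simp add: finite_divisors_nat)
  have pin: "p \<in> {d. d dvd N}" unfolding N_def by simp
  have R: "int p dvd f d" if d: "d \<in> {d. d dvd N} - {p}" for d
  proof -
    define m where "m = N div d"
    have dm: "d * m = N" using d m_def by auto
    have m0: "m \<ge> 1" using dm N1 by (metis less_one mult_0_right not_le)
    show ?thesis
    proof (cases "p dvd m")
      case True thus ?thesis unfolding f_def m_def[symmetric] by simp
    next
      case False
      hence cop: "coprime p m" using p(1) by (simp add: prime_imp_coprime)
      have "m dvd n * p" using dm N_def by (metis dvd_triv_right)
      hence mn: "m dvd n" using cop by (metis coprime_commute coprime_dvd_mult_left_iff)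
      have "m \<noteq> n"
      proof
        assume "m = n"
        hence "d * n = n * p" using dm N_def by simp
        hence "d = p" using less.prems by simp
        thus False using d by simp
      qed
      moreover have "m \<le> n" using mn less.prems by (simp add: dvd_imp_le)
      ultimately have "b m = 0" using less.IH m0 by simp
      thus ?thesis unfolding f_def m_def[symmetric] by simp
    qed
  qed
  have "(\<Sum>d | d dvd N. f d) = f p + (\<Sum>d \<in> {d. d dvd N} - {p}. f d)"
    using sum.remove[OF fin pin] by simp
  moreover have "int p dvd (\<Sum>d \<in> {d. d dvd N} - {p}. f d)"
    by (intro dvd_sum R)
  ultimately have "int p dvd f p" using S by (metis dvd_add_left_iff)
  moreover have "f p = - x" unfolding f_def x_def N_def using moebp[OF p(1)] ppos by simp
  ultimately have px: "int p dvd x" by simp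
  have xl: "\<bar>x\<bar> < int p"
  proof -
    have "nat \<bar>x\<bar> < p" using p(2) by simp
    hence "int (nat \<bar>x\<bar>) < int p" by (simp only: of_nat_less_iff)
    thus ?thesis by simp
  qed
  have "x = 0"
  proof (rule ccontr)
    assume "x \<noteq> 0"
    hence "\<bar>int p\<bar> \<le> \<bar>x\<bar>" using dvd_imp_le_int[of x "int p"] px by simp
    thus False using \<open>\<bar>x\<bar> < int p\<close> by simp
  qed
  thus ?case using less.prems x_def by simp
qed

theorem theorem4:
  shows "(\<forall>a :: nat \<Rightarrow> int. euler_seq (\<lambda>n. int n * a n) \<longrightarrow>
            euler_gauss_seq (\<lambda>n. int n * a n))
       \<and> (\<forall>b :: nat \<Rightarrow> int. gauss_seq (\<lambda>n. int n * b n) \<longleftrightarrow> (\<forall>n\<ge>1. b n = 0))"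
proof (rule conjI)
  show "\<forall>a :: nat \<Rightarrow> int. euler_seq (\<lambda>n. int n * a n) \<longrightarrow>
            euler_gauss_seq (\<lambda>n. int n * a n)"
    using part1 unfolding euler_gauss_seq_def by blast
next
  show "\<forall>b :: nat \<Rightarrow> int. gauss_seq (\<lambda>n. int n * b n) \<longleftrightarrow> (\<forall>n\<ge>1. b n = 0)"
  proof (rule allI, rule iffI)
  fix b :: "nat \<Rightarrow> int"
  assume "gauss_seq (\<lambda>n. int n * b n)"
  thus "\<forall>n\<ge>1. b n = 0" using part2 by blast
next
  fix b :: "nat \<Rightarrow> int"
  assume B: "\<forall>n\<ge>1. b n = 0"
  show "gauss_seq (\<lambda>n. int n * b n)" unfolding gauss_seq_def
  proof (intro allI impI)
    fix n :: nat assume n: "n \<ge> 1"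
    have "(\<Sum>d | d dvd n. moebius d * (int (n div d) * b (n div d))) = 0"
    proof (rule sum.neutral, intro ballI)
      fix d assume "d \<in> {d. d dvd n}"
      hence dn: "d dvd n" by simp
      hence "n div d \<noteq> 0" using n by (auto simp: dvd_div_eq_0_iff)
      hence "n div d \<ge> 1" by simp
      thus "moebius d * (int (n div d) * b (n div d)) = 0" using B by simp
    qed
    thus "[(\<Sum>d | d dvd n. moebius d * (int (n div d) * b (n div d))) = 0] (mod int n)" by simp
  qed
  qed
qed

end
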